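(* Let $n\ge2$, $\kappa\ge1$ and $G\in\mathcal G_{[n;\kappa]}$ with payoff structure vectors $V_1^c,\dots,V_n^c$. Then $G$ is skew-symmetric if and only if $$V_i^c=\mathrm{sgn}(\sigma)\,V_{\sigma(i)}^c\,T_\sigma\quad\text{for all }\sigma\in\mathbf S_n\text{ and }i=1,\dots,n,$$ where $T_\sigma=\Phi_{\sigma^{-1}(1)}*\Phi_{\sigma^{-1}(2)}*\cdots*\Phi_{\sigma^{-1}(n)}$.
   Context: $\delta_\kappa^j$ is the $j$-th column of $I_\kappa$, $\mathbf 1_m$ is the all-ones column vector of length $m$. For $i=1,\dots,n$ let $\Phi_i=\mathbf 1_{\kappa^{i-1}}^T\otimes I_\kappa\otimes\mathbf 1_{\kappa^{n-i}}^T\in\mathbb R^{\kappa\times\kappa^n}$, so that $\Phi_i(x_1\otimes\cdots\otimes x_n)=x_i$ for $x_j\in\{\delta_\kappa^1,\dots,\delta_\kappa^\kappa\}$. The Khatri–Rao product of $A\in\mathbb R^{p\times m}$ and $B\in\mathbb R^{q\times m}$ is $A*B=[\mathrm{Col}_1(A)\otimes\mathrm{Col}_1(B),\dots,\mathrm{Col}_m(A)\otimes\mathrm{Col}_m(B)]\in\mathbb R^{pq\times m}$ (iterated left to right). A finite game $G\in\mathcal G_{[n;\kappa]}$ has players $\{1,\dots,n\}$, each with strategy set $\{1,\dots,\kappa\}$, strategy $j$ identified with $\delta_\kappa^j$, and payoffs $c_i$; $V_i^c\in\mathbb R^{\kappa^n}$ is the unique row vector with $c_i(x_1,\dots,x_n)=V_i^c(x_1\otimes\cdots\otimes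 x_n)$ for all $x_j\in\{\delta_\kappa^1,\dots,\delta_\kappa^\kappa\}$. $\mathbf S_n$ is the symmetric group. $G$ is skew-symmetric if for every $\sigma\in\mathbf S_n$, every $i$ and every profile, $c_i(x_1,\dots,x_n)=\mathrm{sgn}(\sigma)\,c_{\sigma(i)}(x_{\sigma^{-1}(1)},\dots,x_{\sigma^{-1}(n)})$. *)

theory Defs
  imports "Jordan_Normal_Form.Matrix" "HOL-Combinatorics.Permutations" "HOL-Library.FuncSet"
begin

text \<open>All vectors are represented as matrices: column vectors are m x 1 matrices,
row vectors are 1 x m matrices. Players are 1..n, strategies are 1..kappa.\<close>

definition kron :: "real mat \<Rightarrow> real mat \<Rightarrow> real mat" where
  "kron A B = mat (dim_row A * dim_row B) (dim_col A * dim_col B)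
     (\<lambda>(r, c). A $$ (r div dim_row B, c div dim_col B) * B $$ (r mod dim_row B, c mod dim_col B))"

definition khatri_rao :: "real mat \<Rightarrow> real mat \<Rightarrow> real mat" where
  "khatri_rao A B = mat (dim_row A * dim_row B) (dim_col A)
     (\<lambda>(r, c). A $$ (r div dim_row B, c) * B $$ (r mod dim_row B, c))"

definition delta :: "nat \<Rightarrow> nat \<Rightarrow> real mat" where
  "delta \<kappa> j = mat \<kappa> 1 (\<lambda>(r, c). if r = j - 1 then 1 else 0)"

definition ones :: "nat \<Rightarrow> real mat" where
  "ones m = mat m 1 (\<lambda>_. 1)"

definition Phi :: "nat \<Rightarrow> nat \<Rightarrow> nat \<Rightarrow> real mat" where
  "Phi \<kappa> n i = kron (kron (transpose_mat (ones (\<kappa> ^ (i - 1)))) (1\<^sub>m \<kappa>))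
                     (transpose_mat (ones (\<kappa> ^ (n - i))))"

definition T_mat :: "nat \<Rightarrow> nat \<Rightarrow> (nat \<Rightarrow> nat) \<Rightarrow> real mat" where
  "T_mat \<kappa> n \<sigma> = foldl (\<lambda>A i. khatri_rao A (Phi \<kappa> n (inv_into UNIV \<sigma> i))) (Phi \<kappa> n (inv_into UNIV \<sigma> 1)) [2..<n+1]"

definition profiles :: "nat \<Rightarrow> nat \<Rightarrow> (nat \<Rightarrow> nat) set" where
  "profiles n \<kappa> = {1..n} \<rightarrow>\<^sub>E {1..\<kappa>}"

definition prof_kron :: "nat \<Rightarrow> nat \<Rightarrow> (nat \<Rightarrow> nat) \<Rightarrow> real mat" where
  "prof_kron n \<kappa> x = foldl (\<lambda>A j. kron A (delta \<kappa> (x j))) (1\<^sub>m 1) [1..<n+1]"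

text \<open>A game in G_[n;kappa] is given by payoffs c i x (player i, profile x).
  V_i^c is the unique row vector with c_i(x) = V_i^c (x_1 \<otimes> ... \<otimes> x_n).\<close>
definition payoff_vec :: "nat \<Rightarrow> nat \<Rightarrow> (nat \<Rightarrow> (nat \<Rightarrow> nat) \<Rightarrow> real) \<Rightarrow> nat \<Rightarrow> real mat" where
  "payoff_vec n \<kappa> c i = (THE V. V \<in> carrier_mat 1 (\<kappa> ^ n) \<and>
      (\<forall>x\<in>profiles n \<kappa>. V * prof_kron n \<kappa> x = mat 1 1 (\<lambda>_. c i x)))"

definition skew_symmetric :: "nat \<Rightarrow> nat \<Rightarrow> (nat \<Rightarrow> (nat \<Rightarrow> nat) \<Rightarrow> real) \<Rightarrow> bool" where
  "skew_symmetric n \<kappa> c \<longleftrightarrow>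
     (\<forall>\<sigma>. \<sigma> permutes {1..n} \<longrightarrow>
        (\<forall>i\<in>{1..n}. \<forall>x\<in>profiles n \<kappa>.
           c i x = of_int (sign \<sigma>) * c (\<sigma> i) (\<lambda>j\<in>{1..n}. x (inv_into UNIV \<sigma> j))))"

end

theory Submission
  imports Defs
begin

definition dig :: "nat \<Rightarrow> nat \<Rightarrow> nat \<Rightarrow> nat \<Rightarrow> nat" where
  "dig K m j r = r div K ^ (m - j) mod K"

definition enc :: "nat \<Rightarrow> nat \<Rightarrow> (nat \<Rightarrow> nat) \<Rightarrow> nat" where
  "enc K m x = foldl (\<lambda>a j. a * K + (x j - 1)) 0 [1..<m+1]"

lemma enc_0[simp]: "enc K 0 x = 0"
  by (simp add: enc_def)

lemma enc_Suc: "enc K (Suc m) x = enc K m x * K + (x (Suc m) - 1)"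
  by (simp add: enc_def)

lemma enc_less:
  assumes "\<forall>j\<in>{1..m}. x j \<in> {1..K}"
  shows "enc K m x < K ^ m"
  using assms
proof (induction m)
  case 0 then show ?case by simp
next
  case (Suc m)
  have e: "enc K m x + 1 \<le> K ^ m" using Suc by auto
  have "x (Suc m) \<in> {1..K}" using Suc.prems by simp
  then have d: "x (Suc m) - 1 < K" by auto
  have "enc K m x * K + (x (Suc m) - 1) < (enc K m x + 1) * K" using d by simp
  also have "\<dots> \<le> K ^ m * K" using e by (intro mult_right_mono) auto
  finally show ?case by (simp add: enc_Suc mult.commute)
qed

lemma dig_Suc: "j \<le> m \<Longrightarrow> dig K (Suc m) j r = dig K m j (r div K)"
  by (simp add: dig_def Suc_diff_le div_mult2_eq mult.commute)

lemma dig_Suc_top: "dig K (Suc m) (Suc m) r = r mod K"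
  by (simp add: dig_def)

lemma dig_enc:
  assumes "\<forall>j\<in>{1..m}. x j \<in> {1..K}" "j \<in> {1..m}"
  shows "dig K m j (enc K m x) = x j - 1"
  using assms
proof (induction m arbitrary: j)
  case 0 then show ?case by simp
next
  case (Suc m)
  have "x (Suc m) \<in> {1..K}" using Suc.prems by simp
  then have d: "x (Suc m) - 1 < K" by auto
  then have K0: "K > 0" by simp
  have dv: "enc K (Suc m) x div K = enc K m x"
    using d K0 by (simp add: enc_Suc)
  show ?case
  proof (cases "j = Suc m")
    case True
    then show ?thesis using d by (simp add: dig_Suc_top enc_Suc)
  next
    case False
    then have "j \<le> m" using Suc.prems by auto
    then show ?thesis using Suc.IH[of j] Suc.prems False dv by (simp add: dig_Suc)
  qed
qed

lemma dig_inj: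
  assumes "K \<ge> 1" "r < K ^ m" "r' < K ^ m" "\<forall>j\<in>{1..m}. dig K m j r = dig K m j r'"
  shows "r = r'"
  using assms(2-)
proof (induction m arbitrary: r r')
  case 0 then show ?case by simp
next
  case (Suc m)
  have "r div K < K ^ m" "r' div K < K ^ m"
    using Suc.prems assms(1) by (auto intro!: less_mult_imp_div_less simp: mult.commute)
  moreover have "\<forall>j\<in>{1..m}. dig K m j (r div K) = dig K m j (r' div K)"
    using Suc.prems(3) by (auto simp: dig_Suc[symmetric])
  ultimately have "r div K = r' div K" using Suc.IH by blast
  moreover have "r mod K = r' mod K" using Suc.prems(3)[rule_format, of "Suc m"]
    by (simp add: dig_Suc_top)
  ultimately show ?case by (metis div_mult_mod_eq)
qed

lemma kron_unit:
  assumes "K \<ge> 1" "v \<in> {1..K}"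
  shows "kron (mat N 1 (\<lambda>(r, c). if r = e then 1 else 0)) (delta K v)
     = mat (N * K) 1 (\<lambda>(r, c). if r = e * K + (v - 1) then 1 else 0)"
proof (rule eq_matI)
  fix r c assume r: "r < dim_row (mat (N * K) 1 (\<lambda>(r, c). if r = e * K + (v - 1) then 1 else (0::real)))"
    and c: "c < dim_col (mat (N * K) 1 (\<lambda>(r, c). if r = e * K + (v - 1) then 1 else (0::real)))"
  have r': "r < N * K" "c = 0" using r c by auto
  have K0: "K > 0" using assms by simp
  have rd: "r div K < N" using r' by (simp add: less_mult_imp_div_less)
  have rm: "r mod K < K" using K0 by simp
  have v1: "v - 1 < K" using assms by auto
  have iff: "(r = e * K + (v - 1)) \<longleftrightarrow> (r div K = e \<and> r mod K = v - 1)"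
  proof
    assume "r = e * K + (v - 1)" then show "r div K = e \<and> r mod K = v - 1" using v1 K0 by simp
  next
    assume "r div K = e \<and> r mod K = v - 1" then show "r = e * K + (v - 1)"
      by (metis div_mult_mod_eq)
  qed
  show "kron (mat N 1 (\<lambda>(r, c). if r = e then 1 else 0)) (delta K v) $$ (r, c) =
        mat (N * K) 1 (\<lambda>(r, c). if r = e * K + (v - 1) then 1 else 0) $$ (r, c)"
    using r' rd rm iff by (simp add: kron_def delta_def)
qed (auto simp: kron_def delta_def)

lemma prof_kron_gen:
  assumes "K \<ge> 1" "\<forall>j\<in>{1..m}. x j \<in> {1..K}"
  shows "foldl (\<lambda>A j. kron A (delta K (x j))) (1\<^sub>m 1) [1..<m+1]
     = mat (K ^ m) 1 (\<lambda>(r, c). if r = enc K m x then 1 else 0)"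
  using assms(2)
proof (induction m)
  case 0
  show ?case by (rule eq_matI) auto
next
  case (Suc m)
  have v: "x (Suc m) \<in> {1..K}" using Suc.prems by simp
  have IH: "foldl (\<lambda>A j. kron A (delta K (x j))) (1\<^sub>m 1) [1..<m+1]
     = mat (K ^ m) 1 (\<lambda>(r, c). if r = enc K m x then 1 else 0)" using Suc by simp
  have l: "[1..<Suc m + 1] = [1..<m+1] @ [Suc m]" by simp
  show ?case unfolding l foldl_append foldl.simps IH kron_unit[OF assms(1) v]
    by (simp add: enc_Suc mult.commute)
qed

lemma prof_kron_char:
  assumes "K \<ge> 1" "x \<in> profiles n K"
  shows "prof_kron n K x = mat (K ^ n) 1 (\<lambda>(r, c). if r = enc K n x then 1 else 0)"
  unfolding prof_kron_def
  by (rule prof_kron_gen[OF assms(1)]) (use assms(2) in \<open>auto simp: profiles_def\<close>)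

lemma Phi_char:
  assumes "K \<ge> 1" "1 \<le> i" "i \<le> n"
  shows "Phi K n i = mat K (K ^ n) (\<lambda>(r, c). if r = dig K n i c then 1 else 0)"
proof -
  have pw: "K ^ (i - 1) * K * K ^ (n - i) = K ^ n"
    using assms by (metis Suc_diff_le diff_Suc_1 le_add_diff_inverse2 Nat.add_diff_assoc2 mult.commute power_Suc power_add) 
  show ?thesis
  proof (rule eq_matI)
    fix r c assume "r < dim_row (mat K (K ^ n) (\<lambda>(r, c). if r = dig K n i c then 1 else (0::real)))"
      "c < dim_col (mat K (K ^ n) (\<lambda>(r, c). if r = dig K n i c then 1 else (0::real)))"
    then have r: "r < K" and c: "c < K ^ (i - 1) * K * K ^ (n - i)" using pw by auto
    have K0: "K > 0" using assms by simp
    have cd: "c div K ^ (n - i) < K ^ (i - 1) * K" using c by (simp add: less_mult_imp_div_less)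
    have cdd: "c div K ^ (n - i) div K < K ^ (i - 1)" using cd by (simp add: less_mult_imp_div_less)
    have cm: "c mod K ^ (n - i) < K ^ (n - i)" using K0 by simp
    show "Phi K n i $$ (r, c) = mat K (K ^ n) (\<lambda>(r, c). if r = dig K n i c then 1 else 0) $$ (r, c)"
      using r c cd cdd cm K0 pw by (simp add: Phi_def kron_def ones_def dig_def)
  qed (use pw in \<open>auto simp: Phi_def kron_def ones_def\<close>)
qed

lemma khatri_rao_mat:
  "khatri_rao (mat M N f) (mat K N g) = mat (M * K) N (\<lambda>(r, c). f (r div K, c) * g (r mod K, c))"
proof (rule eq_matI)
  fix r c assume "r < dim_row (mat (M * K) N (\<lambda>(r, c). f (r div K, c) * g (r mod K, c)))"
    "c < dim_col (mat (M * K) N (\<lambda>(r, c). f (r div K, c) * g (r mod K, c)))"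
  then have r: "r < M * K" and c: "c < N" by auto
  then have "K > 0" by (cases "K = 0") auto
  then show "khatri_rao (mat M N f) (mat K N g) $$ (r, c) =
         mat (M * K) N (\<lambda>(r, c). f (r div K, c) * g (r mod K, c)) $$ (r, c)"
    using r c by (simp add: khatri_rao_def less_mult_imp_div_less)
qed (auto simp: khatri_rao_def)

lemma T_gen:
  assumes "K \<ge> 1" "\<forall>k\<in>{1..n}. p k \<in> {1..n}"
  shows "1 \<le> m \<Longrightarrow> m \<le> n \<Longrightarrow>
    foldl (\<lambda>A i. khatri_rao A (Phi K n (p i))) (Phi K n (p 1)) [2..<m+1]
     = mat (K ^ m) (K ^ n) (\<lambda>(r, c). if \<forall>k\<in>{1..m}. dig K m k r = dig K n (p k) c then 1 else 0)"
proof (induction m)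
  case 0 then show ?case by simp
next
  case (Suc m)
  have K0: "K > 0" using assms by simp
  have pm: "p (Suc m) \<in> {1..n}" using Suc.prems assms(2) by auto
  show ?case
  proof (cases "m = 0")
    case True
    have p1: "p 1 \<in> {1..n}" using Suc.prems assms(2) by auto
    show ?thesis unfolding True using p1 K0
      by (auto simp: Phi_char[OF assms(1)] dig_def intro!: eq_matI)
  next
    case False
    have IH: "foldl (\<lambda>A i. khatri_rao A (Phi K n (p i))) (Phi K n (p 1)) [2..<m+1]
     = mat (K ^ m) (K ^ n) (\<lambda>(r, c). if \<forall>k\<in>{1..m}. dig K m k r = dig K n (p k) c then 1 else 0)"
      using Suc False by simp
    have l: "[2..<Suc m + 1] = [2..<m+1] @ [Suc m]" using False by simp
    have cond: "(\<forall>k\<in>{1..Suc m}. dig K (Suc m) k r = dig K n (p k) c) \<longleftrightarrow>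
       ((\<forall>k\<in>{1..m}. dig K m k (r div K) = dig K n (p k) c) \<and> r mod K = dig K n (p (Suc m)) c)" for r c
    proof
      assume h: "\<forall>k\<in>{1..Suc m}. dig K (Suc m) k r = dig K n (p k) c"
      show "(\<forall>k\<in>{1..m}. dig K m k (r div K) = dig K n (p k) c) \<and> r mod K = dig K n (p (Suc m)) c"
      proof (intro conjI ballI)
        fix k assume k: "k \<in> {1..m}"
        then show "dig K m k (r div K) = dig K n (p k) c" using h[rule_format, of k]
          by (simp add: dig_Suc)
      next
        show "r mod K = dig K n (p (Suc m)) c" using h[rule_format, of "Suc m"]
          by (simp add: dig_Suc_top)
      qed
    qed (auto simp: dig_Suc dig_Suc_top le_Suc_eq)
    have Pc: "Phi K n (p (Suc m)) = mat K (K ^ n) (\<lambda>(r, c). if r = dig K n (p (Suc m)) c then 1 else 0)"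
      using pm Phi_char[OF assms(1)] by auto
    show ?thesis unfolding l foldl_append foldl.simps IH Pc khatri_rao_mat
      by (auto simp: cond[simplified] mult.commute intro!: cong[OF refl[of "mat (K * K^m) (K^n)"]])
  qed
qed

definition dec :: "nat \<Rightarrow> nat \<Rightarrow> nat \<Rightarrow> (nat \<Rightarrow> nat)" where
  "dec K n r = (\<lambda>j\<in>{1..n}. dig K n j r + 1)"

lemma prof_range: "x \<in> profiles n K \<Longrightarrow> \<forall>j\<in>{1..n}. x j \<in> {1..K}"
  by (auto simp: profiles_def)

lemma dec_prof: "K \<ge> 1 \<Longrightarrow> dec K n r \<in> profiles n K"
  by (auto simp: dec_def profiles_def dig_def Suc_le_eq)

lemma dec_enc:
  assumes "K \<ge> 1" "x \<in> profiles n K"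
  shows "dec K n (enc K n x) = x"
proof
  fix j show "dec K n (enc K n x) j = x j"
  proof (cases "j \<in> {1..n}")
    case True
    have "x j \<in> {1..K}" using prof_range[OF assms(2)] True by blast
    then show ?thesis using dig_enc[OF prof_range[OF assms(2)] True] True
      by (auto simp: dec_def)
  next
    case False
    then show ?thesis using assms(2) by (auto simp: dec_def profiles_def PiE_def extensional_def)
  qed
qed

lemma enc_dec:
  assumes "K \<ge> 1" "r < K ^ n"
  shows "enc K n (dec K n r) = r"
proof (rule dig_inj[OF assms(1) _ assms(2)])
  show "enc K n (dec K n r) < K ^ n" by (rule enc_less[OF prof_range[OF dec_prof[OF assms(1)]]])
  show "\<forall>j\<in>{1..n}. dig K n j (enc K n (dec K n r)) = dig K n j r"
  proof
    fix j assume j: "j \<in> {1..n}"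
    have "dig K n j (enc K n (dec K n r)) = dec K n r j - 1"
      by (rule dig_enc[OF prof_range[OF dec_prof[OF assms(1)]] j])
    then show "dig K n j (enc K n (dec K n r)) = dig K n j r" using j by (simp add: dec_def)
  qed
qed

lemma row_mult_prof:
  assumes "K \<ge> 1" "V \<in> carrier_mat 1 (K ^ n)" "x \<in> profiles n K"
  shows "V * prof_kron n K x = mat 1 1 (\<lambda>_. V $$ (0, enc K n x))"
proof -
  have e: "enc K n x < K ^ n" by (rule enc_less[OF prof_range[OF assms(3)]])
  have "(\<Sum>k\<in>{0..<K ^ n}. V $$ (0, k) * (if k = enc K n x then 1 else 0)) =
        (\<Sum>k\<in>{0..<K ^ n}. if k = enc K n x then V $$ (0, k) else 0)"
    by (rule sum.cong) auto
  also have "\<dots> = V $$ (0, enc K n x)" using e by simp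
  finally have s: "(\<Sum>k\<in>{0..<K ^ n}. V $$ (0, k) * (if k = enc K n x then 1 else 0)) = V $$ (0, enc K n x)" .
  show ?thesis
    unfolding prof_kron_char[OF assms(1,3)]
    using assms(2) s by (auto intro!: eq_matI simp: scalar_prod_def)
qed

lemma payoff_char:
  assumes "K \<ge> 1"
  shows "payoff_vec n K c i = mat 1 (K ^ n) (\<lambda>(_, r). c i (dec K n r))"
  unfolding payoff_vec_def
proof (rule the_equality)
  show "mat 1 (K ^ n) (\<lambda>(_, r). c i (dec K n r)) \<in> carrier_mat 1 (K ^ n) \<and>
    (\<forall>x\<in>profiles n K. mat 1 (K ^ n) (\<lambda>(_, r). c i (dec K n r)) * prof_kron n K x = mat 1 1 (\<lambda>_. c i x))"
  proof (intro conjI ballI)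
    fix x assume x: "x \<in> profiles n K"
    have e: "enc K n x < K ^ n" by (rule enc_less[OF prof_range[OF x]])
    show "mat 1 (K ^ n) (\<lambda>(_, r). c i (dec K n r)) * prof_kron n K x = mat 1 1 (\<lambda>_. c i x)"
      unfolding row_mult_prof[OF assms(1) _ x, of "mat 1 (K ^ n) (\<lambda>(_, r). c i (dec K n r))", OF mat_carrier]
      using e dec_enc[OF assms x] by simp
  qed simp
next
  fix V assume h: "V \<in> carrier_mat 1 (K ^ n) \<and> (\<forall>x\<in>profiles n K. V * prof_kron n K x = mat 1 1 (\<lambda>_. c i x))"
  show "V = mat 1 (K ^ n) (\<lambda>(_, r). c i (dec K n r))"
  proof (rule eq_matI)
    fix a r assume a: "a < dim_row (mat 1 (K ^ n) (\<lambda>(_, r). c i (dec K n r)))"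
      and r: "r < dim_col (mat 1 (K ^ n) (\<lambda>(_, r). c i (dec K n r)))"
    then have a0: "a = 0" and r': "r < K ^ n" by auto
    have "V * prof_kron n K (dec K n r) = mat 1 1 (\<lambda>_. c i (dec K n r))"
      using h dec_prof[OF assms] by blast
    then have "mat 1 1 (\<lambda>_. V $$ (0, r)) = mat 1 1 (\<lambda>_. c i (dec K n r))"
      using row_mult_prof[OF assms _ dec_prof[OF assms], of V n r] h enc_dec[OF assms r'] by simp
    then have "mat 1 1 (\<lambda>_. V $$ (0, r)) $$ (0,0) = mat 1 1 (\<lambda>_. c i (dec K n r)) $$ (0, 0)" by simp
    then show "V $$ (a, r) = mat 1 (K ^ n) (\<lambda>(_, r). c i (dec K n r)) $$ (a, r)"
      using a0 r' by simp
  qed (use h in auto)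
qed

definition ys :: "nat \<Rightarrow> nat \<Rightarrow> (nat \<Rightarrow> nat) \<Rightarrow> (nat \<Rightarrow> nat) \<Rightarrow> (nat \<Rightarrow> nat)" where
  "ys K n \<sigma> x = (\<lambda>j\<in>{1..n}. x (inv_into UNIV \<sigma> j))"

lemma inv_range: assumes s: "\<sigma> permutes {1..n}" shows "\<forall>k\<in>{1..n}. inv_into UNIV \<sigma> k \<in> {1..n}"
proof
  fix k assume k: "k \<in> {1..n}"
  have "inv_into UNIV \<sigma> permutes {1..n}" by (rule permutes_inv[OF s])
  then show "inv_into UNIV \<sigma> k \<in> {1..n}" using permutes_in_image k by metis
qed

lemma ys_prof:
  assumes "\<sigma> permutes {1..n}" "x \<in> profiles n K"
  shows "ys K n \<sigma> x \<in> profiles n K"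
proof -
  have "\<forall>j\<in>{1..n}. x (inv_into UNIV \<sigma> j) \<in> {1..K}"
  proof
    fix j assume "j \<in> {1..n}"
    then have "inv_into UNIV \<sigma> j \<in> {1..n}" using inv_range[OF assms(1)] by blast
    then show "x (inv_into UNIV \<sigma> j) \<in> {1..K}" using prof_range[OF assms(2)] by blast
  qed
  then show ?thesis unfolding ys_def profiles_def by (simp add: restrict_PiE_iff)
qed

lemma T_char:
  assumes "K \<ge> 1" "n \<ge> 1" "\<sigma> permutes {1..n}"
  shows "T_mat K n \<sigma> = mat (K ^ n) (K ^ n) (\<lambda>(r, col). if r = enc K n (ys K n \<sigma> (dec K n col)) then 1 else 0)"
proof -
  have T: "T_mat K n \<sigma> = mat (K ^ n) (K ^ n) (\<lambda>(r, c). if \<forall>k\<in>{1..n}. dig K n k r = dig K n (inv_into UNIV \<sigma> k) c then 1 else 0)"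
    unfolding T_mat_def by (rule T_gen[OF assms(1) inv_range[OF assms(3)] assms(2) order.refl])
  have cond: "(\<forall>k\<in>{1..n}. dig K n k r = dig K n (inv_into UNIV \<sigma> k) col) \<longleftrightarrow> r = enc K n (ys K n \<sigma> (dec K n col))"
    if r: "r < K ^ n" for r col
  proof -
    let ?y = "ys K n \<sigma> (dec K n col)"
    have yp: "?y \<in> profiles n K" by (rule ys_prof[OF assms(3) dec_prof[OF assms(1)]])
    have dy: "dig K n k (enc K n ?y) = dig K n (inv_into UNIV \<sigma> k) col" if k: "k \<in> {1..n}" for k
    proof -
      have "dig K n k (enc K n ?y) = ?y k - 1" by (rule dig_enc[OF prof_range[OF yp] k])
      also have "\<dots> = dig K n (inv_into UNIV \<sigma> k) col"
        using k inv_range[OF assms(3)] by (simp add: ys_def dec_def)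
      finally show ?thesis .
    qed
    show ?thesis
    proof
      assume h: "\<forall>k\<in>{1..n}. dig K n k r = dig K n (inv_into UNIV \<sigma> k) col"
      have "\<forall>j\<in>{1..n}. dig K n j r = dig K n j (enc K n ?y)" using h dy by simp
      then show "r = enc K n ?y"
        by (rule dig_inj[OF assms(1) r enc_less[OF prof_range[OF yp]]])
    next
      assume "r = enc K n ?y" then show "\<forall>k\<in>{1..n}. dig K n k r = dig K n (inv_into UNIV \<sigma> k) col"
        using dy by simp
    qed
  qed
  show ?thesis unfolding T
  proof (rule eq_matI)
    fix r col assume "r < dim_row (mat (K ^ n) (K ^ n) (\<lambda>(r, col). if r = enc K n (ys K n \<sigma> (dec K n col)) then 1 else (0::real)))"
      "col < dim_col (mat (K ^ n) (K ^ n) (\<lambda>(r, col). if r = enc K n (ys K n \<sigma> (dec K n col)) then 1 else (0::real)))"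
    then have r: "r < K ^ n" and c: "col < K ^ n" by auto
    show "mat (K ^ n) (K ^ n) (\<lambda>(r, c). if \<forall>k\<in>{1..n}. dig K n k r = dig K n (inv_into UNIV \<sigma> k) c then 1 else 0) $$ (r, col) =
          mat (K ^ n) (K ^ n) (\<lambda>(r, col). if r = enc K n (ys K n \<sigma> (dec K n col)) then 1 else 0) $$ (r, col)"
      using r c cond[OF r, of col] by (simp only: index_mat split) 
  qed auto
qed

lemma VT:
  assumes "K \<ge> 1" "n \<ge> 1" "\<sigma> permutes {1..n}"
  shows "mat 1 (K ^ n) (\<lambda>(_, r). g r) * T_mat K n \<sigma> = mat 1 (K ^ n) (\<lambda>(_, col). g (enc K n (ys K n \<sigma> (dec K n col))))"
proof (rule eq_matI)
  fix a col assume "a < dim_row (mat 1 (K ^ n) (\<lambda>(_, col). g (enc K n (ys K n \<sigma> (dec K n col)))))"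
    "col < dim_col (mat 1 (K ^ n) (\<lambda>(_, col). g (enc K n (ys K n \<sigma> (dec K n col)))))"
  then have a: "a = 0" and col: "col < K ^ n" by auto
  let ?e = "enc K n (ys K n \<sigma> (dec K n col))"
  have e: "?e < K ^ n" by (rule enc_less[OF prof_range[OF ys_prof[OF assms(3) dec_prof[OF assms(1)]]]])
  have "(\<Sum>k\<in>{0..<K ^ n}. g k * (if k = ?e then 1 else 0)) =
        (\<Sum>k\<in>{0..<K ^ n}. if k = ?e then g k else 0)"
    by (rule sum.cong) auto
  also have "\<dots> = g ?e" using e by simp
  finally have s: "(\<Sum>k\<in>{0..<K ^ n}. g k * (if k = ?e then 1 else 0)) = g ?e" .
  show "(mat 1 (K ^ n) (\<lambda>(_, r). g r) * T_mat K n \<sigma>) $$ (a, col) =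
        mat 1 (K ^ n) (\<lambda>(_, col). g (enc K n (ys K n \<sigma> (dec K n col)))) $$ (a, col)"
    unfolding T_char[OF assms]
    using a col s by (simp add: scalar_prod_def)
qed (auto simp: T_char[OF assms])

lemma mat_row_eq: "(mat 1 N f = mat 1 N g) \<longleftrightarrow> (\<forall>col<N. f (0, col) = g (0, col))"
proof
  assume h: "mat 1 N f = mat 1 N g"
  show "\<forall>col<N. f (0, col) = g (0, col)"
  proof (intro allI impI)
    fix col assume "col < N"
    then show "f (0, col) = g (0, col)" using arg_cong[OF h, of "\<lambda>M. M $$ (0, col)"] by simp
  qed
qed (auto intro!: eq_matI)

theorem proposition3p15:
  fixes n \<kappa> :: nat and c :: "nat \<Rightarrow> (nat \<Rightarrow> nat) \<Rightarrow> real"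
  assumes "n \<ge> 2" and "\<kappa> \<ge> 1"
  shows "skew_symmetric n \<kappa> c \<longleftrightarrow>
    (\<forall>\<sigma>. \<sigma> permutes {1..n} \<longrightarrow>
       (\<forall>i\<in>{1..n}. payoff_vec n \<kappa> c i =
          of_int (sign \<sigma>) \<cdot>\<^sub>m (payoff_vec n \<kappa> c (\<sigma> i) * T_mat \<kappa> n \<sigma>)))"
proof -
  have n1: "n \<ge> 1" using assms by simp
  note K = assms(2)
  have key: "(payoff_vec n \<kappa> c i = of_int (sign \<sigma>) \<cdot>\<^sub>m (payoff_vec n \<kappa> c (\<sigma> i) * T_mat \<kappa> n \<sigma>))
     \<longleftrightarrow> (\<forall>x\<in>profiles n \<kappa>. c i x = of_int (sign \<sigma>) * c (\<sigma> i) (\<lambda>j\<in>{1..n}. x (inv_into UNIV \<sigma> j)))"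
    if s: "\<sigma> permutes {1..n}" for \<sigma> i
  proof -
    have "of_int (sign \<sigma>) \<cdot>\<^sub>m (payoff_vec n \<kappa> c (\<sigma> i) * T_mat \<kappa> n \<sigma>)
        = mat 1 (\<kappa> ^ n) (\<lambda>(_, col). of_int (sign \<sigma>) * c (\<sigma> i) (dec \<kappa> n (enc \<kappa> n (ys \<kappa> n \<sigma> (dec \<kappa> n col)))))"
      unfolding payoff_char[OF K] VT[OF K n1 s] by (auto intro!: eq_matI)
    also have "\<dots> = mat 1 (\<kappa> ^ n) (\<lambda>(_, col). of_int (sign \<sigma>) * c (\<sigma> i) (ys \<kappa> n \<sigma> (dec \<kappa> n col)))"
      using dec_enc[OF K ys_prof[OF s dec_prof[OF K]]] by simp
    finally have R: "of_int (sign \<sigma>) \<cdot>\<^sub>m (payoff_vec n \<kappa> c (\<sigma> i) * T_mat \<kappa> n \<sigma>) = mat 1 (\<kappa> ^ n) (\<lambda>(_, col). of_int (sign \<sigma>) * c (\<sigma> i) (ys \<kappa> n \<sigma> (dec \<kappa> n col)))" .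
    have "(payoff_vec n \<kappa> c i = of_int (sign \<sigma>) \<cdot>\<^sub>m (payoff_vec n \<kappa> c (\<sigma> i) * T_mat \<kappa> n \<sigma>))
       \<longleftrightarrow> (\<forall>col<\<kappa> ^ n. c i (dec \<kappa> n col) = of_int (sign \<sigma>) * c (\<sigma> i) (ys \<kappa> n \<sigma> (dec \<kappa> n col)))"
      unfolding R unfolding payoff_char[OF K] mat_row_eq by simp
    also have "\<dots> \<longleftrightarrow> (\<forall>x\<in>profiles n \<kappa>. c i x = of_int (sign \<sigma>) * c (\<sigma> i) (ys \<kappa> n \<sigma> x))"
    proof
      assume h: "\<forall>col<\<kappa> ^ n. c i (dec \<kappa> n col) = of_int (sign \<sigma>) * c (\<sigma> i) (ys \<kappa> n \<sigma> (dec \<kappa> n col))"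
      show "\<forall>x\<in>profiles n \<kappa>. c i x = of_int (sign \<sigma>) * c (\<sigma> i) (ys \<kappa> n \<sigma> x)"
      proof
        fix x assume x: "x \<in> profiles n \<kappa>"
        show "c i x = of_int (sign \<sigma>) * c (\<sigma> i) (ys \<kappa> n \<sigma> x)"
          using h[rule_format, OF enc_less[OF prof_range[OF x]]] dec_enc[OF K x] by simp
      qed
    next
      assume h: "\<forall>x\<in>profiles n \<kappa>. c i x = of_int (sign \<sigma>) * c (\<sigma> i) (ys \<kappa> n \<sigma> x)"
      then show "\<forall>col<\<kappa> ^ n. c i (dec \<kappa> n col) = of_int (sign \<sigma>) * c (\<sigma> i) (ys \<kappa> n \<sigma> (dec \<kappa> n col))"
        using dec_prof[OF K] by blast
    qed
    finally show ?thesis by (simp add: ys_def)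
  qed
  show ?thesis unfolding skew_symmetric_def using key by blast
qed

end
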